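(* Let $F$ be a field of characteristic zero. Let $N\ge0$ and let $\{d_s\}_{s\ge N}\subseteq\mathbb{N}$, $\{\tau_s\}_{s\ge N}\subseteq\mathbb{N}$ be fixed. Suppose a family of elements $\beta^s_i\in F$ ($s\ge N$, $i\ge\tau_s$) satisfies $$\beta^n_m\beta^s_t=\beta^n_m\beta^s_{m+t+d_n}+\beta^s_t\beta^n_{m+t+d_s}\quad\text{for all } n,s\ge N,\ m\ge\tau_n,\ t\ge\tau_s.$$ Then either $\beta^s_t=0$ for all $s\ge N$, $t\ge\tau_s$, or there exist a set $I\subseteq\mathbb{N}$ and integers $\Delta$, $\{k_i\}_{i\in I}$ with $\beta^i_{k_i}\ne0$, $0\le k_i-\tau_i<\Delta\le k_i+d_i$ and $\Delta\mid k_i+d_i$ for $i\in I$, such that for all $s\ge N$, $t\ge\tau_s$: $$\beta^s_t=\begin{cases}\dfrac{(k_s+d_s)\beta^s_{k_s}}{k_s+d_s+\Delta l}, & s\in I,\ t=k_s+\Delta l,\ l\ge0,\\ 0,&\text{otherwise}.\end{cases}$$ In particular, if $d_s=\tau_s=0$ for all $s$, then $\beta^s_t=0$ for all $s\ge N$, $t\ge\tau_s$.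
   Context: $\mathbb{N}$ includes $0$. The notation $\beta^s_t$ denotes an element indexed by two indices $s$ and $t$; the superscript is not a power. *)

theory Defs
  imports Main
begin

end

theory Submission imports Defs begin
lemma per_struct:
  fixes P :: "nat \<Rightarrow> bool" and \<tau> k c :: nat
  assumes Ptau: "\<And>t. P t \<Longrightarrow> \<tau> \<le> t" and Pk: "P k" and kmin: "\<And>t. P t \<Longrightarrow> k \<le> t"
    and per: "\<And>m t. P m \<Longrightarrow> \<tau> \<le> t \<Longrightarrow> P t \<longleftrightarrow> P (t + (m + c))"
    and pos: "0 < k + c"
  shows "\<exists>D>0. D dvd k + c \<and> k < \<tau> + D \<and> (\<forall>t. P t \<longleftrightarrow> (k \<le> t \<and> D dvd (t - k)))"
proof -
  define isper where "isper p \<longleftrightarrow> (\<forall>t\<ge>\<tau>. P t \<longleftrightarrow> P (t+p))" for p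
  have isperD: "P t \<longleftrightarrow> P (t+p)" if "isper p" "\<tau> \<le> t" for p t
    using that(1)[unfolded isper_def, rule_format, OF that(2)] .
  have perm: "isper (m + c)" if "P m" for m unfolding isper_def using per[OF that] by blast
  have diff: "isper (q - p)" if "isper p" "isper q" "p < q" for p q
    unfolding isper_def
  proof (intro allI impI)
    fix t assume t: "\<tau> \<le> t"
    have "P (t + (q - p)) \<longleftrightarrow> P (t + (q - p) + p)" using isperD[OF that(1) le_trans[OF t le_add1]] .
    also have "t + (q - p) + p = t + q" using that(3) by simp
    also have "P (t + q) \<longleftrightarrow> P t" using isperD[OF that(2) t] by (rule sym)
    finally show "P t \<longleftrightarrow> P (t + (q - p))" by simp
  qed
  have mult: "isper (j * p)" if "isper p" for j p
  proof (induction j)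
    case 0 then show ?case unfolding isper_def by simp
  next
    case (Suc j)
    show ?case unfolding isper_def
    proof (intro allI impI)
      fix t assume t: "\<tau> \<le> t"
      have "P t \<longleftrightarrow> P (t + j*p)" using isperD[OF Suc t] .
      also have "\<dots> \<longleftrightarrow> P (t + j*p + p)" using isperD[OF that, of "t + j*p"] t by (simp only: le_add1 le_trans[OF t])
      finally have "P t \<longleftrightarrow> P (t + j*p + p)" .
      moreover have "t + j*p + p = t + Suc j * p" by simp
      ultimately show "P t \<longleftrightarrow> P (t + Suc j * p)" by simp
    qed
  qed
  have ex: "\<exists>p. 0 < p \<and> isper p" using perm[OF Pk] pos by blast
  define D where "D = (LEAST p. 0 < p \<and> isper p)"
  have D: "0 < D" "isper D" using LeastI_ex[OF ex] unfolding D_def by auto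
  have Dmin: "D \<le> p" if "0 < p" "isper p" for p unfolding D_def using that by (simp add: Least_le)
  have Ddvd: "D dvd p" if "0 < p" "isper p" for p
    using that
  proof (induction p rule: less_induct)
    case (less p)
    have "D \<le> p" using Dmin less.prems by auto
    show ?case
    proof (cases "D = p")
      case True then show ?thesis by simp
    next
      case False
      then have "D < p" using \<open>D \<le> p\<close> by simp
      have "isper (p - D)" using diff[OF D(2) less.prems(2) \<open>D < p\<close>] .
      then have "D dvd (p - D)" using less.IH[of "p - D"] \<open>D < p\<close> D(1) by simp
      then show ?thesis using \<open>D < p\<close>
        by (metis dvd_add_left_iff dvd_refl le_add_diff_inverse2 less_imp_le_nat)
    qed
  qed
  have dvdm: "D dvd m + c" if "P m" for m using Ddvd[OF _ perm[OF that]] pos kmin[OF that] by auto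
  have dk: "D dvd k + c" using dvdm[OF Pk] .
  have char: "P t \<longleftrightarrow> (k \<le> t \<and> D dvd (t - k))" for t
  proof
    assume Pt: "P t"
    have "k \<le> t" using kmin[OF Pt] .
    moreover have "D dvd (t + c) - (k + c)" using dvd_diff_nat[OF dvdm[OF Pt] dk] .
    ultimately show "k \<le> t \<and> D dvd (t - k)" by simp
  next
    assume "k \<le> t \<and> D dvd (t - k)"
    then obtain j where j: "t = k + D * j" by (metis dvd_def le_add_diff_inverse)
    have "\<tau> \<le> k" using Ptau[OF Pk] .
    then have "P k \<longleftrightarrow> P (k + j * D)" using isperD[OF mult[OF D(2), of j]] by blast
    then show "P t" using Pk j by (simp add: mult.commute)
  qed
  have "k < \<tau> + D"
  proof (rule ccontr)
    assume "\<not> k < \<tau> + D"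
    then have "\<tau> \<le> k - D" by simp
    then have "P (k - D) \<longleftrightarrow> P (k - D + D)" using isperD[OF D(2)] by blast
    moreover have "k - D + D = k" using \<open>\<not> k < \<tau> + D\<close> by simp
    ultimately have "P (k - D)" using Pk by simp
    then show False using kmin[of "k - D"] D(1) \<open>\<not> k < \<tau> + D\<close> by simp
  qed
  then show ?thesis using D(1) dk char by blast
qed

lemma values_lem:
  fixes f :: "nat \<Rightarrow> 'a::field_char_0"
  assumes Dp: "0 < D" and Ddvd: "D dvd k + c" and pos: "0 < k + c"
    and nz: "\<And>l. f (k + D*l) \<noteq> 0"
    and eq: "\<And>a b. f (k+D*a) * f (k+D*b) = (f (k+D*a) + f (k+D*b)) * f (k + D*a + (k + D*b) + c)"
  shows "f (k + D*l) = of_nat (k+c) * f k / of_nat (k + D*l + c)"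
proof -
  obtain e where e: "k + c = D * e" using Ddvd by (auto simp: dvd_def)
  have ep: "0 < e" using e pos by (cases e) auto
  define h where "h l = inverse (f (k + D*l))" for l
  have arg: "k + D*a + (k + D*b) + c = k + D*(a+b+e)" for a b using e by (simp add: algebra_simps)
  have hrel: "h (a+b+e) = h a + h b" for a b
  proof -
    have x: "f (k+D*a) \<noteq> 0" "f (k+D*b) \<noteq> 0" "f (k+D*(a+b+e)) \<noteq> 0" using nz by auto
    have "f (k+D*a) * f (k+D*b) = (f (k+D*a) + f (k+D*b)) * f (k + D*(a+b+e))"
      using eq[of a b] arg[of a b] by simp
    moreover have "\<And>x y z::'a. x \<noteq> 0 \<Longrightarrow> y \<noteq> 0 \<Longrightarrow> z \<noteq> 0 \<Longrightarrow> x * y = (x + y) * z \<Longrightarrow> inverse z = inverse x + inverse y"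
    proof -
      fix x y z :: 'a assume a: "x \<noteq> 0" "y \<noteq> 0" "z \<noteq> 0" "x * y = (x + y) * z"
      then have "x + y \<noteq> 0" by auto
      then have z: "z = x * y / (x + y)" using a(4) by (simp add: eq_divide_eq algebra_simps)
      have "inverse x + inverse y = (x + y) / (x * y)" using a(1,2) by (simp add: field_simps)
      then show "inverse z = inverse x + inverse y" using z by simp
    qed
    ultimately show ?thesis unfolding h_def using x by blast
  qed
  define \<delta> where "\<delta> = h 1 - h 0"
  have step: "h (Suc a) = h a + \<delta>" for a
  proof -
    have "h (Suc a) + h 0 = h a + h 1" using hrel[of "Suc a" 0] hrel[of a 1] by simp
    then show ?thesis unfolding \<delta>_def by (simp add: add_diff_eq eq_diff_eq)
  qed
  have lin: "h l = h 0 + of_nat l * \<delta>" for l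
    by (induction l) (auto simp: step algebra_simps)
  have "h e = h 0 + h 0" using hrel[of 0 0] by simp
  then have de: "of_nat e * \<delta> = h 0" using lin[of e] by simp
  have f0: "f k \<noteq> 0" using nz[of 0] by simp
  have h0: "h 0 = inverse (f k)" unfolding h_def by simp
  have "h l = h 0 * (of_nat e + of_nat l) / of_nat e" using lin[of l] de ep
    by (simp add: field_simps)
  then have "f (k + D*l) = inverse (h 0 * (of_nat e + of_nat l) / of_nat e)"
    unfolding h_def by (metis inverse_inverse_eq)
  also have "\<dots> = of_nat e * f k / (of_nat e + of_nat l)"
  proof -
    have "of_nat (e + l) \<noteq> (0::'a)" unfolding of_nat_eq_0_iff using ep by simp
    then have el: "(of_nat e + of_nat l :: 'a) \<noteq> 0" by (simp only: of_nat_add not_False_eq_True)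
    have e0: "(of_nat e :: 'a) \<noteq> 0" using ep by simp
    show ?thesis unfolding h0 using el e0 f0 by (simp add: field_simps)
  qed
  also have "\<dots> = of_nat (k+c) * f k / of_nat (k + D*l + c)"
  proof -
    have "k + D*l + c = D * (e + l)" using e by (simp add: algebra_simps)
    then have "of_nat (k + D*l + c) = (of_nat (D * (e + l)) :: 'a)" by (rule arg_cong)
    then have "of_nat (k + D*l + c) = (of_nat D * (of_nat e + of_nat l) :: 'a)" by simp
    moreover have "of_nat (k + c) = (of_nat D * of_nat e :: 'a)" using e by simp
    ultimately show ?thesis using Dp by simp
  qed
  finally show ?thesis .
qed

theorem lemma2p5:
  fixes beta :: "nat \<Rightarrow> nat \<Rightarrow> 'a :: field_char_0"
    and d tau :: "nat \<Rightarrow> nat"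
    and N :: nat
  assumes rel: "\<And>n s m t. N \<le> n \<Longrightarrow> N \<le> s \<Longrightarrow> tau n \<le> m \<Longrightarrow> tau s \<le> t \<Longrightarrow>
      beta n m * beta s t = beta n m * beta s (m + t + d n) + beta s t * beta n (m + t + d s)"
  shows "((\<forall>s t. N \<le> s \<longrightarrow> tau s \<le> t \<longrightarrow> beta s t = 0) \<or>
          (\<exists>(I :: nat set) (\<Delta> :: int) (k :: nat \<Rightarrow> int).
             (\<forall>i\<in>I. N \<le> i \<and> beta i (nat (k i)) \<noteq> 0 \<and>
                     0 \<le> k i - int (tau i) \<and> k i - int (tau i) < \<Delta> \<and>
                     \<Delta> \<le> k i + int (d i) \<and> \<Delta> dvd (k i + int (d i))) \<and>
             (\<forall>s t. N \<le> s \<longrightarrow> tau s \<le> t \<longrightarrow>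
                beta s t =
                  (if s \<in> I \<and> (\<exists>l::nat. int t = k s + \<Delta> * int l)
                   then of_int (k s + int (d s)) * beta s (nat (k s)) / of_int (int t + int (d s))
                   else 0))))
       \<and> ((\<forall>s. N \<le> s \<longrightarrow> d s = 0 \<and> tau s = 0) \<longrightarrow>
            (\<forall>s t. N \<le> s \<longrightarrow> tau s \<le> t \<longrightarrow> beta s t = 0))"
proof -
  have A: "beta s (m + t + d n) = 0" if "N \<le> n" "N \<le> s" "tau n \<le> m" "tau s \<le> t"
    "beta n m \<noteq> 0" "beta s t = 0" for n s m t
    using rel[OF that(1-4)] that(5,6) by simp
  define Q where "Q s kk D \<longleftrightarrow> tau s \<le> kk \<and> beta s kk \<noteq> 0 \<and> 0 < D \<and> 0 < kk + d s \<and>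
      D dvd kk + d s \<and> kk < tau s + D \<and>
      (\<forall>t. (tau s \<le> t \<and> beta s t \<noteq> 0) \<longleftrightarrow> (kk \<le> t \<and> D dvd (t - kk))) \<and>
      (\<forall>l. beta s (kk + D*l) = of_nat (kk + d s) * beta s kk / of_nat (kk + D*l + d s))" for s kk D
  have Qp: "tau s \<le> kk" "beta s kk \<noteq> 0" "0 < D" "0 < kk + d s" "D dvd kk + d s" "kk < tau s + D"
     "\<And>t. (tau s \<le> t \<and> beta s t \<noteq> 0) \<longleftrightarrow> (kk \<le> t \<and> D dvd (t - kk))"
     "\<And>l. beta s (kk + D*l) = of_nat (kk + d s) * beta s kk / of_nat (kk + D*l + d s)"
     if "Q s kk D" for s kk D
  proof -
    note q = that[unfolded Q_def]
    show "tau s \<le> kk" using q[THEN conjunct1] .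
    show "beta s kk \<noteq> 0" using q[THEN conjunct2, THEN conjunct1] .
    show "0 < D" using q[THEN conjunct2, THEN conjunct2, THEN conjunct1] .
    show "0 < kk + d s" using q[THEN conjunct2, THEN conjunct2, THEN conjunct2, THEN conjunct1] .
    show "D dvd kk + d s" using q[THEN conjunct2, THEN conjunct2, THEN conjunct2, THEN conjunct2, THEN conjunct1] .
    show "kk < tau s + D" using q[THEN conjunct2, THEN conjunct2, THEN conjunct2, THEN conjunct2, THEN conjunct2, THEN conjunct1] .
    show "(tau s \<le> t \<and> beta s t \<noteq> 0) \<longleftrightarrow> (kk \<le> t \<and> D dvd (t - kk))" for t
      using q[THEN conjunct2, THEN conjunct2, THEN conjunct2, THEN conjunct2, THEN conjunct2, THEN conjunct2, THEN conjunct1, rule_format] .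
    show "beta s (kk + D*l) = of_nat (kk + d s) * beta s kk / of_nat (kk + D*l + d s)" for l
      using q[THEN conjunct2, THEN conjunct2, THEN conjunct2, THEN conjunct2, THEN conjunct2, THEN conjunct2, THEN conjunct2, rule_format] .
  qed
  have one: "\<exists>kk D. Q s kk D" if sN: "N \<le> s" and ex: "\<exists>t. tau s \<le> t \<and> beta s t \<noteq> 0" for s
  proof -
    define P where "P t \<longleftrightarrow> tau s \<le> t \<and> beta s t \<noteq> 0" for t
    define kk where "kk = (LEAST t. P t)"
    have exP: "\<exists>t. P t" using ex unfolding P_def .
    have Pk: "P kk" unfolding kk_def using LeastI_ex[OF exP] .
    have kmin: "kk \<le> t" if "P t" for t unfolding kk_def using that by (rule Least_le)
    have per: "P t \<longleftrightarrow> P (t + (m + d s))" if "P m" "tau s \<le> t" for m t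
    proof
      assume Pt: "P t"
      show "P (t + (m + d s))"
      proof (rule ccontr)
        assume "\<not> P (t + (m + d s))"
        then have "beta s (m + t + d s) = 0" using that(2) unfolding P_def by (simp add: ac_simps)
        then have "beta s m * beta s t = 0" using rel[OF sN sN, of m t] that Pt unfolding P_def by simp
        then show False using that Pt unfolding P_def by simp
      qed
    next
      assume "P (t + (m + d s))"
      then show "P t" using A[OF sN sN, of m t] that unfolding P_def by (auto simp: ac_simps)
    qed
    have pos: "0 < kk + d s"
    proof (rule ccontr)
      assume "\<not> 0 < kk + d s"
      then have z: "kk + kk + d s = kk" by simp
      have "beta s kk * beta s kk = beta s kk * beta s kk + beta s kk * beta s kk"
        using rel[OF sN sN, of kk kk] Pk unfolding P_def z by simp
      then show False using Pk unfolding P_def by simp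
    qed
    obtain D where D: "0 < D" "D dvd kk + d s" "kk < tau s + D"
      "\<forall>t. P t \<longleftrightarrow> (kk \<le> t \<and> D dvd (t - kk))"
      using per_struct[of P "tau s" kk "d s", OF _ Pk kmin per pos] unfolding P_def by blast
    have tk: "tau s \<le> kk" using Pk unfolding P_def by simp
    have nz: "beta s (kk + D*l) \<noteq> 0" for l using D(4)[rule_format, of "kk + D*l"] tk unfolding P_def by simp
    have tk: "tau s \<le> kk" using Pk unfolding P_def by simp
    have eq: "beta s (kk+D*a) * beta s (kk+D*b) = (beta s (kk+D*a) + beta s (kk+D*b)) * beta s (kk + D*a + (kk + D*b) + d s)" for a b
      using rel[OF sN sN, of "kk+D*a" "kk+D*b"] tk by (simp add: algebra_simps)
    have vals: "beta s (kk + D*l) = of_nat (kk + d s) * beta s kk / of_nat (kk + D*l + d s)" for l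
      using values_lem[of D kk "d s" "beta s", OF D(1,2) pos nz eq] .
    show ?thesis unfolding Q_def using Pk D pos vals unfolding P_def by blast
  qed
  define I where "I = {s. N \<le> s \<and> (\<exists>t. tau s \<le> t \<and> beta s t \<noteq> 0)}"
  have "\<forall>s\<in>I. \<exists>kk D. Q s kk D" using one unfolding I_def by blast
  then obtain KK DD where KD: "\<And>s. s \<in> I \<Longrightarrow> Q s (KK s) (DD s)" by metis
  have cross1: "DD s dvd m + d n" if sI: "s \<in> I" and nI: "n \<in> I" and m: "tau n \<le> m" "beta n m \<noteq> 0" for s n m
  proof -
    have Qs: "Q s (KK s) (DD s)" using KD sI .
    define X where "X = m + d n + tau s"
    define u where "u = KK s + DD s * X"
    have D0: "0 < DD s" using Qp(3)[OF Qs] .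
    have XX: "X \<le> DD s * X" using D0 by (cases "DD s") auto
    have X: "m + d n \<le> DD s * X" using XX unfolding X_def by linarith
    define t where "t = u - (m + d n)"
    have tt: "tau s \<le> t" unfolding t_def u_def using XX unfolding X_def by linarith
    have u: "m + t + d n = u" unfolding t_def u_def using X by simp
    have tk: "tau s \<le> KK s" using Qp(1)[OF Qs] .
    have bu: "beta s u \<noteq> 0" using Qp(7)[OF Qs, of u] tk unfolding u_def by simp
    have "beta s t \<noteq> 0" using A[of n s m t] nI sI m tt u bu unfolding I_def by auto
    then have "DD s dvd t - KK s" using Qp(7)[OF Qs, of t] tt by blast
    moreover have "t - KK s = DD s * X - (m + d n)" unfolding t_def u_def using X by simp
    ultimately have "DD s dvd DD s * X - (m + d n)" by simp
    then have "DD s dvd DD s * X - (DD s * X - (m + d n))" by (simp add: dvd_diff_nat)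
    then show ?thesis using X by simp
  qed
  have cross: "DD s dvd DD n" if sI: "s \<in> I" and nI: "n \<in> I" for s n
  proof -
    have Qn: "Q n (KK n) (DD n)" using KD nI .
    have a: "tau n \<le> KK n" "beta n (KK n) \<noteq> 0" using Qp[OF Qn] by auto
    have b0: "tau n \<le> KK n + DD n" using a by simp
    have b: "tau n \<le> KK n + DD n" "beta n (KK n + DD n) \<noteq> 0"
      using Qp(7)[OF Qn, of "KK n + DD n"] b0 by auto
    have "DD s dvd (KK n + DD n + d n) - (KK n + d n)"
      using dvd_diff_nat[OF cross1[OF sI nI b] cross1[OF sI nI a]] .
    then show ?thesis by simp
  qed
  have Deq: "DD s = DD n" if "s \<in> I" "n \<in> I" for s n
    using cross[OF that] cross[OF that(2,1)] by (rule dvd_antisym)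
  have part1: "(\<forall>s t. N \<le> s \<longrightarrow> tau s \<le> t \<longrightarrow> beta s t = 0) \<or>
          (\<exists>(I :: nat set) (\<Delta> :: int) (k :: nat \<Rightarrow> int).
             (\<forall>i\<in>I. N \<le> i \<and> beta i (nat (k i)) \<noteq> 0 \<and>
                     0 \<le> k i - int (tau i) \<and> k i - int (tau i) < \<Delta> \<and>
                     \<Delta> \<le> k i + int (d i) \<and> \<Delta> dvd (k i + int (d i))) \<and>
             (\<forall>s t. N \<le> s \<longrightarrow> tau s \<le> t \<longrightarrow>
                beta s t =
                  (if s \<in> I \<and> (\<exists>l::nat. int t = k s + \<Delta> * int l)
                   then of_int (k s + int (d s)) * beta s (nat (k s)) / of_int (int t + int (d s))
                   else 0)))"
  proof (cases "I = {}")
    case True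
    then show ?thesis unfolding I_def by auto
  next
    case False
    then obtain s0 where s0: "s0 \<in> I" by blast
    define \<Delta> where "\<Delta> = int (DD s0)"
    define k where "k s = int (KK s)" for s
    have c1: "\<forall>i\<in>I. N \<le> i \<and> beta i (nat (k i)) \<noteq> 0 \<and>
                     0 \<le> k i - int (tau i) \<and> k i - int (tau i) < \<Delta> \<and>
                     \<Delta> \<le> k i + int (d i) \<and> \<Delta> dvd (k i + int (d i))"
    proof
      fix i assume iI: "i \<in> I"
      have Q: "Q i (KK i) (DD i)" using KD iI .
      have D: "DD i = DD s0" using Deq[OF iI s0] .
      have "DD i \<le> KK i + d i" using Qp(4,5)[OF Q] by (auto intro: dvd_imp_le)
      moreover have "int (DD i) dvd int (KK i + d i)" using Qp(5)[OF Q] by (simp only: int_dvd_int_iff)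
      ultimately show "N \<le> i \<and> beta i (nat (k i)) \<noteq> 0 \<and>
                     0 \<le> k i - int (tau i) \<and> k i - int (tau i) < \<Delta> \<and>
                     \<Delta> \<le> k i + int (d i) \<and> \<Delta> dvd (k i + int (d i))"
        using Qp(1-6)[OF Q] iI D unfolding k_def \<Delta>_def I_def by auto
    qed
    have c2: "\<forall>s t. N \<le> s \<longrightarrow> tau s \<le> t \<longrightarrow>
                beta s t =
                  (if s \<in> I \<and> (\<exists>l::nat. int t = k s + \<Delta> * int l)
                   then of_int (k s + int (d s)) * beta s (nat (k s)) / of_int (int t + int (d s))
                   else 0)"
    proof (intro allI impI)
      fix s t assume sN: "N \<le> s" and ts: "tau s \<le> t"
      show "beta s t =
                  (if s \<in> I \<and> (\<exists>l::nat. int t = k s + \<Delta> * int l)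
                   then of_int (k s + int (d s)) * beta s (nat (k s)) / of_int (int t + int (d s))
                   else 0)"
      proof (cases "s \<in> I")
        case False
        then show ?thesis using sN ts unfolding I_def by auto
      next
        case sI: True
        have Q: "Q s (KK s) (DD s)" using KD sI .
        have D: "DD s = DD s0" using Deq[OF sI s0] .
        show ?thesis
        proof (cases "\<exists>l::nat. int t = k s + \<Delta> * int l")
          case True
          then obtain l where l: "int t = k s + \<Delta> * int l" by blast
          then have tl: "t = KK s + DD s * l" unfolding k_def \<Delta>_def D by (simp only: of_nat_mult[symmetric] of_nat_add[symmetric] of_nat_eq_iff)
          have "beta s t = of_nat (KK s + d s) * beta s (KK s) / of_nat (KK s + DD s * l + d s)"
            unfolding tl by (rule Qp(8)[OF Q])
          also have "\<dots> = of_int (k s + int (d s)) * beta s (nat (k s)) / of_int (int t + int (d s))"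
            unfolding k_def tl by simp
          finally show ?thesis using True sI by simp
        next
          case False
          have "beta s t = 0"
          proof (rule ccontr)
            assume "beta s t \<noteq> 0"
            then have "KK s \<le> t \<and> DD s dvd (t - KK s)" using Qp(7)[OF Q, of t] ts by blast
            then obtain l where "t = KK s + DD s * l" by (metis dvd_def le_add_diff_inverse)
            then have "int t = k s + \<Delta> * int l" unfolding k_def \<Delta>_def D by simp
            then show False using False by blast
          qed
          then show ?thesis using False by simp
        qed
      qed
    qed
    show ?thesis using c1 c2 by blast
  qed
  have part2: "(\<forall>s. N \<le> s \<longrightarrow> d s = 0 \<and> tau s = 0) \<longrightarrow>
            (\<forall>s t. N \<le> s \<longrightarrow> tau s \<le> t \<longrightarrow> beta s t = 0)"
  proof (intro impI allI)
    fix s t assume z: "\<forall>s. N \<le> s \<longrightarrow> d s = 0 \<and> tau s = 0" and sN: "N \<le> s" and ts: "tau s \<le> t"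
    show "beta s t = 0"
    proof (rule ccontr)
      assume "beta s t \<noteq> 0"
      then have sI: "s \<in> I" unfolding I_def using sN ts by blast
      have Q: "Q s (KK s) (DD s)" using KD sI .
      have zz: "d s = 0" "tau s = 0" using z sN by auto
      have "DD s dvd KK s" "KK s < DD s" "0 < KK s" using Qp(4,5,6)[OF Q] zz by auto
      then show False using dvd_imp_le by fastforce
    qed
  qed
  show ?thesis using part1 part2 by blast
qed

end
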